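(* Let $A\subseteq\Omega$ be arbitrary. Then $\mu^*(A)=0$ if and only if there exists a $\mathcal{P}$-e-process $(E_t)_{t\in\mathbb{N}_0}$ such that $\lim_{t\to\infty}E_t=\infty$ at every point of $A$.
   Context: Standing setup: $(\Omega, (\mathcal{F}_t)_{t\in\mathbb{N}_0}, \mathcal{F})$ is a filtered measurable space with $\mathcal{F} = \sigma\big(\bigcup_{t} \mathcal{F}_t\big)$. A stopping time is a map $\tau:\Omega\to\mathbb{N}_0\cup\{\infty\}$ with $\{\tau \le t\}\in\mathcal{F}_t$ for all $t$; $\mathcal{T}$ denotes the set of all stopping times. $\mathcal{P}$ is an arbitrary family of probability measures on $\mathcal{F}$. The inverse-capital measure is defined for every $A\subseteq\Omega$ by $\mu^*(A) = \inf_{\tau\in\mathcal{T}:\, A\subseteq\{\tau<\infty\}} \sup_{\mathbb{P}\in\mathcal{P}} \mathbb{P}(\tau<\infty)$. A $\mathcal{P}$-e-process is a nonnegative (possibly $[0,\infty]$-valued) process $(E_t)_{t\in\mathbb{N}_0}$ adapted to $(\mathcal{F}_t)$ such that $\mathbb{E}_{\mathbb{P}}[E_\tau]\le 1$ for every $\mathbb{P}\in\mathcal{P}$ and every $\tau\in\mathcal{T}$, with the convention $E_\infty=\limsup_{t\to\infty}E_t$. *)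

theory Defs
  imports "HOL-Probability.Probability"
begin

definition nat_filtration :: "'a set \<Rightarrow> (nat \<Rightarrow> 'a measure) \<Rightarrow> bool" where
  "nat_filtration \<Omega> F \<longleftrightarrow> (\<forall>t. space (F t) = \<Omega>) \<and> (\<forall>s t. s \<le> t \<longrightarrow> sets (F s) \<subseteq> sets (F t))"

definition F_infty :: "'a set \<Rightarrow> (nat \<Rightarrow> 'a measure) \<Rightarrow> 'a measure" where
  "F_infty \<Omega> F = sigma \<Omega> (\<Union>t. sets (F t))"

definition stopping_time_enat :: "'a set \<Rightarrow> (nat \<Rightarrow> 'a measure) \<Rightarrow> ('a \<Rightarrow> enat) \<Rightarrow> bool" where
  "stopping_time_enat \<Omega> F \<tau> \<longleftrightarrow> (\<forall>t. {\<omega>\<in>\<Omega>. \<tau> \<omega> \<le> enat t} \<in> sets (F t))"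

definition stopped_value :: "(nat \<Rightarrow> 'a \<Rightarrow> ennreal) \<Rightarrow> ('a \<Rightarrow> enat) \<Rightarrow> 'a \<Rightarrow> ennreal" where
  "stopped_value E \<tau> \<omega> = (case \<tau> \<omega> of enat t \<Rightarrow> E t \<omega> | \<infinity> \<Rightarrow> limsup (\<lambda>t. E t \<omega>))"

definition e_process :: "'a set \<Rightarrow> (nat \<Rightarrow> 'a measure) \<Rightarrow> 'a measure set \<Rightarrow> (nat \<Rightarrow> 'a \<Rightarrow> ennreal) \<Rightarrow> bool" where
  "e_process \<Omega> F Ps E \<longleftrightarrow>
     (\<forall>t. E t \<in> borel_measurable (F t)) \<and>
     (\<forall>P\<in>Ps. \<forall>\<tau>. stopping_time_enat \<Omega> F \<tau> \<longrightarrow> (\<integral>\<^sup>+ \<omega>. stopped_value E \<tau> \<omega> \<partial>P) \<le> 1)"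

definition mu_star :: "'a set \<Rightarrow> (nat \<Rightarrow> 'a measure) \<Rightarrow> 'a measure set \<Rightarrow> 'a set \<Rightarrow> ennreal" where
  "mu_star \<Omega> F Ps A =
     (INF \<tau>\<in>{\<tau>. stopping_time_enat \<Omega> F \<tau> \<and> A \<subseteq> {\<omega>\<in>\<Omega>. \<tau> \<omega> < \<infinity>}}.
        SUP P\<in>Ps. emeasure P {\<omega>\<in>\<Omega>. \<tau> \<omega> < \<infinity>})"

end

theory Submission
  imports Defs
begin

lemma Finf_pow:
  assumes "nat_filtration \<Omega> F"
  shows "(\<Union>t. sets (F t)) \<subseteq> Pow \<Omega>"
  using assms sets.sets_into_space unfolding nat_filtration_def by fastforce

lemma Finf_space:
  assumes "nat_filtration \<Omega> F"
  shows "space (F_infty \<Omega> F) = \<Omega>"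
  unfolding F_infty_def using space_measure_of[OF Finf_pow[OF assms]] by simp

lemma Finf_sets:
  assumes "nat_filtration \<Omega> F" "S \<in> sets (F t)"
  shows "S \<in> sets (F_infty \<Omega> F)"
  unfolding F_infty_def using sets_measure_of[OF Finf_pow[OF assms(1)]] assms(2)
  by (auto intro: sigma_sets.Basic)

lemma fin_meas:
  assumes "nat_filtration \<Omega> F" "stopping_time_enat \<Omega> F \<tau>"
  shows "{\<omega>\<in>\<Omega>. \<tau> \<omega> < \<infinity>} \<in> sets (F_infty \<Omega> F)"
proof -
  have "{\<omega>\<in>\<Omega>. \<tau> \<omega> < \<infinity>} = (\<Union>t. {\<omega>\<in>\<Omega>. \<tau> \<omega> \<le> enat t})"
    apply (rule set_eqI)
    apply (case_tac "\<tau> x")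
     apply auto
    done
  also have "\<dots> \<in> sets (F_infty \<Omega> F)"
    using assms Finf_sets unfolding stopping_time_enat_def by blast
  finally show ?thesis .
qed


lemma dir2:
  assumes filt: "nat_filtration \<Omega> F"
    and Ps: "\<forall>P\<in>Ps. prob_space P \<and> sets P = sets (F_infty \<Omega> F)"
    and AO: "A \<subseteq> \<Omega>"
    and E: "e_process \<Omega> F Ps E" and lim: "\<forall>\<omega>\<in>A. (\<lambda>t. E t \<omega>) \<longlonglongrightarrow> \<infinity>"
  shows "mu_star \<Omega> F Ps A = 0"
proof -
  have key: "mu_star \<Omega> F Ps A \<le> ennreal (1 / real (Suc n))" for n
  proof -
    define c where "c = real (Suc n)"
    have cpos: "c > 0" unfolding c_def by simp
    define \<tau> where "\<tau> \<omega> = (if \<exists>t. ennreal c \<le> E t \<omega> then enat (LEAST t. ennreal c \<le> E t \<omega>) else \<infinity>)" for \<omega>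
    have st: "stopping_time_enat \<Omega> F \<tau>"
      unfolding stopping_time_enat_def
    proof
      fix t
      have "{\<omega>\<in>\<Omega>. \<tau> \<omega> \<le> enat t} = (\<Union>s\<in>{..t}. {\<omega>\<in>space (F s). ennreal c \<le> E s \<omega>})"
      proof (rule set_eqI, rule iffI)
        fix \<omega> assume "\<omega> \<in> {\<omega>\<in>\<Omega>. \<tau> \<omega> \<le> enat t}"
        then have o: "\<omega> \<in> \<Omega>" and le: "\<tau> \<omega> \<le> enat t" by auto
        then have ex: "\<exists>t. ennreal c \<le> E t \<omega>" unfolding \<tau>_def by (auto split: if_splits)
        then have "(LEAST t. ennreal c \<le> E t \<omega>) \<le> t" using le unfolding \<tau>_def by auto
        moreover have "ennreal c \<le> E (LEAST t. ennreal c \<le> E t \<omega>) \<omega>" using ex by (rule LeastI_ex)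
        ultimately show "\<omega> \<in> (\<Union>s\<in>{..t}. {\<omega>\<in>space (F s). ennreal c \<le> E s \<omega>})"
          using o filt unfolding nat_filtration_def by auto
      next
        fix \<omega> assume "\<omega> \<in> (\<Union>s\<in>{..t}. {\<omega>\<in>space (F s). ennreal c \<le> E s \<omega>})"
        then obtain s where s: "s \<le> t" "\<omega> \<in> space (F s)" "ennreal c \<le> E s \<omega>" by auto
        then have "(LEAST t. ennreal c \<le> E t \<omega>) \<le> s" by (simp add: Least_le)
        then show "\<omega> \<in> {\<omega>\<in>\<Omega>. \<tau> \<omega> \<le> enat t}"
          using s filt unfolding nat_filtration_def \<tau>_def by auto
      qed
      also have "\<dots> \<in> sets (F t)"
      proof (rule sets.finite_UN)
        fix s assume "s \<in> {..t}"
        have "{\<omega>\<in>space (F s). ennreal c \<le> E s \<omega>} \<in> sets (F s)"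
        proof -
          have "E s \<in> borel_measurable (F s)" using E unfolding e_process_def by auto
          then show ?thesis by measurable
        qed
        then show "{\<omega>\<in>space (F s). ennreal c \<le> E s \<omega>} \<in> sets (F t)"
          using filt \<open>s \<in> {..t}\<close> unfolding nat_filtration_def by (metis atMost_iff subsetD)
      qed simp
      finally show "{\<omega>\<in>\<Omega>. \<tau> \<omega> \<le> enat t} \<in> sets (F t)" .
    qed
    have cover: "A \<subseteq> {\<omega>\<in>\<Omega>. \<tau> \<omega> < \<infinity>}"
    proof
      fix \<omega> assume "\<omega> \<in> A"
      then have "eventually (\<lambda>t. ennreal c < E t \<omega>) sequentially"
        using lim by (intro order_tendstoD(1)) auto
      then obtain t where "ennreal c < E t \<omega>" by (auto simp: eventually_sequentially)
      then show "\<omega> \<in> {\<omega>\<in>\<Omega>. \<tau> \<omega> < \<infinity>}" using \<open>\<omega> \<in> A\<close> AO unfolding \<tau>_def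
        by (auto intro!: exI[of _ t] less_imp_le)
    qed
    have "mu_star \<Omega> F Ps A \<le> (SUP P\<in>Ps. emeasure P {\<omega>\<in>\<Omega>. \<tau> \<omega> < \<infinity>})"
      unfolding mu_star_def using st cover by (intro INF_lower) auto
    also have "\<dots> \<le> ennreal (1 / c)"
    proof (rule SUP_least)
      fix P assume P: "P \<in> Ps"
      let ?S = "{\<omega>\<in>\<Omega>. \<tau> \<omega> < \<infinity>}"
      have SP: "?S \<in> sets P" using P Ps fin_meas[OF filt st] by auto
      have spP: "space P = \<Omega>" using P Ps Finf_space[OF filt] sets_eq_imp_space_eq by metis
      have "ennreal c * emeasure P ?S = (\<integral>\<^sup>+ \<omega>. ennreal c * indicator ?S \<omega> \<partial>P)"
        using SP by (simp add: nn_integral_cmult_indicator)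
      also have "\<dots> \<le> (\<integral>\<^sup>+ \<omega>. stopped_value E \<tau> \<omega> \<partial>P)"
      proof (rule nn_integral_mono)
        fix \<omega> assume "\<omega> \<in> space P"
        show "ennreal c * indicator ?S \<omega> \<le> stopped_value E \<tau> \<omega>"
        proof (cases "\<omega> \<in> ?S")
          case True
          then have ex: "\<exists>t. ennreal c \<le> E t \<omega>" unfolding \<tau>_def by (auto split: if_splits)
          then have "ennreal c \<le> E (LEAST t. ennreal c \<le> E t \<omega>) \<omega>" by (rule LeastI_ex)
          then show ?thesis using True ex unfolding stopped_value_def \<tau>_def by auto
        qed simp
      qed
      also have "\<dots> \<le> 1" using E P st unfolding e_process_def by auto
      finally have cm: "ennreal c * emeasure P ?S \<le> 1" .
      have "emeasure P ?S = ennreal (1/c) * (ennreal c * emeasure P ?S)"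
        using cpos by (simp add: ennreal_mult'' [symmetric] mult.assoc [symmetric])
      also have "\<dots> \<le> ennreal (1/c) * 1" using cm by (intro mult_left_mono) auto
      finally show "emeasure P ?S \<le> ennreal (1/c)" by simp
    qed
    finally show ?thesis unfolding c_def .
  qed
  have "(\<lambda>n. ennreal (1 / real (Suc n))) \<longlonglongrightarrow> ennreal 0"
    using LIMSEQ_inverse_real_of_nat by (intro tendsto_ennrealI) (simp add: inverse_eq_divide)
  then have "mu_star \<Omega> F Ps A \<le> 0"
    using key by (intro LIMSEQ_le_const) auto
  then show ?thesis by simp
qed


lemma dir1:
  assumes filt: "nat_filtration \<Omega> F"
    and Ps: "\<forall>P\<in>Ps. prob_space P \<and> sets P = sets (F_infty \<Omega> F)"
    and AO: "A \<subseteq> \<Omega>"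
    and mu: "mu_star \<Omega> F Ps A = 0"
  shows "\<exists>E. e_process \<Omega> F Ps E \<and> (\<forall>\<omega>\<in>A. (\<lambda>t. E t \<omega>) \<longlonglongrightarrow> \<infinity>)"
proof -
  have "\<forall>n. \<exists>\<tau>. (stopping_time_enat \<Omega> F \<tau> \<and> A \<subseteq> {\<omega>\<in>\<Omega>. \<tau> \<omega> < \<infinity>}) \<and>
      (SUP P\<in>Ps. emeasure P {\<omega>\<in>\<Omega>. \<tau> \<omega> < \<infinity>}) < ennreal ((1/2)^Suc n)"
  proof
    fix n
    have "mu_star \<Omega> F Ps A < ennreal ((1/2)^Suc n)" using mu by simp
    then show "\<exists>\<tau>. (stopping_time_enat \<Omega> F \<tau> \<and> A \<subseteq> {\<omega>\<in>\<Omega>. \<tau> \<omega> < \<infinity>}) \<and>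
      (SUP P\<in>Ps. emeasure P {\<omega>\<in>\<Omega>. \<tau> \<omega> < \<infinity>}) < ennreal ((1/2)^Suc n)"
      unfolding mu_star_def INF_less_iff by auto
  qed
  then obtain T where T0: "\<forall>n. (stopping_time_enat \<Omega> F (T n) \<and> A \<subseteq> {\<omega>\<in>\<Omega>. T n \<omega> < \<infinity>}) \<and>
      (SUP P\<in>Ps. emeasure P {\<omega>\<in>\<Omega>. T n \<omega> < \<infinity>}) < ennreal ((1/2)^Suc n)"
    by (rule choice[THEN exE])
  have T: "\<And>n. stopping_time_enat \<Omega> F (T n)"
    "\<And>n. A \<subseteq> {\<omega>\<in>\<Omega>. T n \<omega> < \<infinity>}"
    "\<And>n. (SUP P\<in>Ps. emeasure P {\<omega>\<in>\<Omega>. T n \<omega> < \<infinity>}) < ennreal ((1/2)^Suc n)"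
    using T0 by auto
  define E where "E t \<omega> = (\<Sum>n. indicator {\<omega>\<in>\<Omega>. T n \<omega> \<le> enat t} \<omega> :: ennreal)" for t \<omega>
  define G where "G \<omega> = (\<Sum>n. indicator {\<omega>\<in>\<Omega>. T n \<omega> < \<infinity>} \<omega> :: ennreal)" for \<omega>
  have EG: "E t \<omega> \<le> G \<omega>" for t \<omega>
    unfolding E_def G_def by (intro suminf_le summableI) (auto split: split_indicator dest: enat_ile)
  have sG: "stopped_value E \<tau> \<omega> \<le> G \<omega>" for \<tau> \<omega>
  proof (cases "\<tau> \<omega>")
    case (enat k) then show ?thesis using EG by (simp add: stopped_value_def)
  next
    case infinity then show ?thesis using EG
      by (simp add: stopped_value_def) (intro Limsup_bounded always_eventually, auto)
  qed
  have ep: "e_process \<Omega> F Ps E"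
    unfolding e_process_def
  proof (intro conjI allI ballI impI)
    fix t
    show "E t \<in> borel_measurable (F t)"
      unfolding E_def using T(1) unfolding stopping_time_enat_def
      by (intro borel_measurable_suminf_order borel_measurable_indicator) auto
  next
    fix P \<tau> assume P: "P \<in> Ps" and st: "stopping_time_enat \<Omega> F \<tau>"
    have SP: "{\<omega>\<in>\<Omega>. T n \<omega> < \<infinity>} \<in> sets P" for n using P Ps fin_meas[OF filt T(1)] by auto
    have "(\<integral>\<^sup>+ \<omega>. stopped_value E \<tau> \<omega> \<partial>P) \<le> (\<integral>\<^sup>+ \<omega>. G \<omega> \<partial>P)"
      using sG by (intro nn_integral_mono) auto
    also have "\<dots> = (\<Sum>n. emeasure P {\<omega>\<in>\<Omega>. T n \<omega> < \<infinity>})"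
      unfolding G_def using SP by (subst nn_integral_suminf) auto
    also have "\<dots> \<le> (\<Sum>n. ennreal ((1/2)^Suc n))"
    proof (intro suminf_le summableI)
      fix n
      have "emeasure P {\<omega>\<in>\<Omega>. T n \<omega> < \<infinity>} \<le> (SUP P\<in>Ps. emeasure P {\<omega>\<in>\<Omega>. T n \<omega> < \<infinity>})"
        using P by (rule SUP_upper)
      also have "\<dots> \<le> ennreal ((1/2)^Suc n)" using T(3)[of n] by simp
      finally show "emeasure P {\<omega>\<in>\<Omega>. T n \<omega> < \<infinity>} \<le> ennreal ((1/2)^Suc n)" .
    qed
    also have "\<dots> = 1"
      using power_half_series by (subst suminf_ennreal_eq) auto
    finally show "(\<integral>\<^sup>+ \<omega>. stopped_value E \<tau> \<omega> \<partial>P) \<le> 1" .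
  qed
  have lim: "(\<lambda>t. E t \<omega>) \<longlonglongrightarrow> \<infinity>" if w: "\<omega> \<in> A" for \<omega>
  proof (rule order_tendstoI)
    fix y :: ennreal assume "y < \<infinity>"
    then obtain N where N: "y < of_nat N" using ennreal_Ex_less_of_nat by auto
    define k where "k n = the_enat (T n \<omega>)" for n
    have Tk: "T n \<omega> = enat (k n)" for n
      using T(2)[of n] w unfolding k_def by auto
    define K where "K = (\<Sum>n<N. k n)"
    have "of_nat N \<le> E t \<omega>" if t: "t \<ge> K" for t
    proof -
      have "(of_nat N :: ennreal) = (\<Sum>n<N. indicator {\<omega>\<in>\<Omega>. T n \<omega> \<le> enat t} \<omega>)"
      proof -
        have "n < N \<Longrightarrow> k n \<le> t" for n
        proof -
          assume "n < N"
          then have "k n \<le> K" unfolding K_def by (intro member_le_sum) auto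
          then show "k n \<le> t" using t by simp
        qed
        then have "\<And>n. n \<in> {..<N} \<Longrightarrow> indicator {\<omega>\<in>\<Omega>. T n \<omega> \<le> enat t} \<omega> = (1::ennreal)"
          using w AO Tk by (auto simp: indicator_def)
        then show ?thesis by simp
      qed
      also have "\<dots> \<le> E t \<omega>" unfolding E_def by (intro sum_le_suminf summableI) auto
      finally show ?thesis .
    qed
    then show "\<forall>\<^sub>F t in sequentially. y < E t \<omega>"
      using N unfolding eventually_sequentially by (blast intro: less_le_trans)
  next
    fix a :: ennreal assume "\<infinity> < a" then show "\<forall>\<^sub>F t in sequentially. E t \<omega> < a" by simp
  qed
  show ?thesis using ep lim by blast
qed

theorem mainTheorem3:
  fixes \<Omega> :: "'a set" and F :: "nat \<Rightarrow> 'a measure" and Ps :: "'a measure set" and A :: "'a set"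
  assumes "nat_filtration \<Omega> F"
    and "\<forall>P\<in>Ps. prob_space P \<and> sets P = sets (F_infty \<Omega> F)"
    and "A \<subseteq> \<Omega>"
  shows "mu_star \<Omega> F Ps A = 0 \<longleftrightarrow>
         (\<exists>E. e_process \<Omega> F Ps E \<and> (\<forall>\<omega>\<in>A. (\<lambda>t. E t \<omega>) \<longlonglongrightarrow> \<infinity>))"
  using dir1[OF assms] dir2[OF assms] by blast

end
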